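(* Let $X_n$ be the number of head abstractions of a uniformly random plain $\lambda$-term of size $n$. Then $X_n$ converges in law to a geometric distribution with parameter $\rho$: for every $h\ge0$, $\mathbb P(X_n=h)\to(1-\rho)\rho^h$ as $n\to\infty$. In particular $\mathbb E X_n\to \rho/(1-\rho)\approx 0.4196$.
   Context: Plain $\lambda$-terms in de Bruijn notation are generated by $T::=\underline{n}\mid \lambda T\mid (T\,T)$, with index $\underline n$ encoded as $\mathsf S^n\mathsf 0$. Size: $|\mathsf 0|=1$, $|\mathsf S\,\underline n|=|\underline n|+1$, $|M\,N|=|M|+|N|+1$, $|\lambda M|=|M|+1$. Every term can be written uniquely as $\lambda^h M$ with $M$ not an abstraction; $h$ is its number of head abstractions. $\rho\approx 0.29559774$ is the positive real root of $z^3+z^2+3z-1$ (the radius of convergence of the generating function of plain terms). *)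

theory Defs
  imports Complex_Main
begin

text \<open>Plain lambda-terms in de Bruijn notation; the index n stands for S^n 0.\<close>
datatype lterm = Var nat | Lam lterm | App lterm lterm

text \<open>Size: |0| = 1, |S n| = |n| + 1 (so |Var n| = n + 1), |M N| = |M|+|N|+1, |\<lambda>M| = |M|+1.\<close>
fun tsize :: "lterm \<Rightarrow> nat" where
  "tsize (Var n) = Suc n"
| "tsize (Lam M) = Suc (tsize M)"
| "tsize (App M N) = Suc (tsize M + tsize N)"

fun heads :: "lterm \<Rightarrow> nat" where
  "heads (Lam M) = Suc (heads M)"
| "heads (Var n) = 0"
| "heads (App M N) = 0"

definition terms_of_size :: "nat \<Rightarrow> lterm set" where
  "terms_of_size n = {t. tsize t = n}"

definition prob_heads :: "nat \<Rightarrow> nat \<Rightarrow> real" where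
  "prob_heads n h = real (card {t \<in> terms_of_size n. heads t = h}) / real (card (terms_of_size n))"

definition exp_heads :: "nat \<Rightarrow> real" where
  "exp_heads n = (\<Sum>t\<in>terms_of_size n. real (heads t)) / real (card (terms_of_size n))"

definition rho :: real where
  "rho = (THE z. z > 0 \<and> z^3 + z^2 + 3*z - 1 = 0)"

end

theory Submission
  imports Defs "HOL-Complex_Analysis.Complex_Analysis"
begin

lemma cubic_mono: "0 \<le> (x::real) \<Longrightarrow> x < y \<Longrightarrow> x^3+x^2+3*x < y^3+y^2+3*y"
proof -
  assume "0 \<le> x" "x < y"
  have "x^3 \<le> y^3" using \<open>0\<le>x\<close> \<open>x<y\<close> by (simp add: power_mono)
  moreover have "x^2 \<le> y^2" using \<open>0\<le>x\<close> \<open>x<y\<close> by (simp add: power_mono)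
  ultimately show ?thesis using \<open>x<y\<close> by linarith
qed

lemma rho_ex: "\<exists>z::real. 29/100 < z \<and> z < 3/10 \<and> z^3 + z^2 + 3*z - 1 = 0"
proof -
  have "\<exists>z\<ge>29/100. z \<le> 3/10 \<and> (\<lambda>z::real. z^3 + z^2 + 3*z - 1) z = 0"
    by (rule IVT) (auto simp: power3_eq_cube power2_eq_square intro!: continuous_intros)
  then obtain z::real where z: "29/100 \<le> z" "z \<le> 3/10" "z^3 + z^2 + 3*z - 1 = 0" by auto
  have "z \<noteq> 29/100" proof assume "z = 29/100" with z(3) show False by (simp add: power3_eq_cube power2_eq_square) qed
  moreover have "z \<noteq> 3/10" proof assume "z = 3/10" with z(3) show False by (simp add: power3_eq_cube power2_eq_square) qed
  ultimately show ?thesis using z by (intro exI[of _ z]) auto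
qed

lemma rho_props: "rho > 0" "rho^3 + rho^2 + 3*rho - 1 = 0" "29/100 < rho" "rho < 3/10"
proof -
  obtain z::real where z: "29/100 < z" "z < 3/10" "z^3 + z^2 + 3*z - 1 = 0" using rho_ex by blast
  have u: "w = z" if "w > 0" "w^3+w^2+3*w-1 = 0" for w::real
  proof (rule ccontr)
    assume "w \<noteq> z"
    then consider "w < z" | "z < w" by linarith
    then show False
    proof cases
      case 1 show False using cubic_mono[of w z] 1 that z by auto
    next
      case 2 show False using cubic_mono[of z w] 2 that z by auto
    qed
  qed
  have "rho = z" unfolding rho_def
    by (rule the_equality) (use z u in auto)
  thus "rho > 0" "rho^3 + rho^2 + 3*rho - 1 = 0" "29/100 < rho" "rho < 3/10" using z by auto
qed

definition T :: "nat \<Rightarrow> nat" where "T n = card (terms_of_size n)"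

lemma tsize_pos: "tsize t > 0" by (cases t) auto

lemma tos_0: "terms_of_size 0 = {}" using tsize_pos by (auto simp: terms_of_size_def)

lemma tos_Suc: "terms_of_size (Suc n) = insert (Var n) (Lam ` terms_of_size n \<union>
   (\<Union>i\<in>{..n}. (\<lambda>(a,b). App a b) ` (terms_of_size i \<times> terms_of_size (n - i))))"
  (is "?L = ?R")
proof
  show "?L \<subseteq> ?R"
  proof
    fix t assume "t \<in> ?L"
    hence t: "tsize t = Suc n" by (simp add: terms_of_size_def)
    show "t \<in> ?R"
    proof (cases t)
      case (Var x) thus ?thesis using t by auto
    next
      case (Lam M) thus ?thesis using t by (auto simp: terms_of_size_def)
    next
      case (App a b) 
      then have "tsize a \<in> {..n}" "tsize b = n - tsize a" using t by auto
      thus ?thesis using App by (auto simp: terms_of_size_def image_iff)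
    qed
  qed
next
  show "?R \<subseteq> ?L" by (auto simp: terms_of_size_def)
qed

lemma finite_tos: "finite (terms_of_size n)"
proof (induction n rule: less_induct)
  case (less n)
  show ?case
  proof (cases n)
    case 0 thus ?thesis by (simp add: tos_0)
  next
    case (Suc m)
    have "finite (terms_of_size i)" if "i \<le> m" for i using less Suc that by auto
    moreover have "finite (terms_of_size (m - i))" for i using less Suc by auto
    ultimately show ?thesis unfolding Suc tos_Suc by auto
  qed
qed

lemma T_0: "T 0 = 0" by (simp add: T_def tos_0)

lemma T_Suc: "T (Suc n) = Suc (T n + (\<Sum>i\<le>n. T i * T (n - i)))"
proof -
  let ?A = "\<lambda>i. (\<lambda>(a,b). App a b) ` (terms_of_size i \<times> terms_of_size (n - i))"
  have fin: "finite (?A i)" for i using finite_tos by auto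
  have cardA: "card (?A i) = T i * T (n - i)" for i
  proof -
    have "inj_on (\<lambda>(a,b). App a b) (terms_of_size i \<times> terms_of_size (n - i))"
      by (auto simp: inj_on_def)
    thus ?thesis by (simp add: card_image card_cartesian_product T_def)
  qed
  have disj: "?A i \<inter> ?A j = {}" if "i \<noteq> j" for i j
    using that by (auto simp: terms_of_size_def)
  have cU: "card (\<Union>i\<in>{..n}. ?A i) = (\<Sum>i\<le>n. T i * T (n - i))"
    by (subst card_UN_disjoint) (use fin disj cardA in auto)
  have cL: "card (Lam ` terms_of_size n) = T n"
    by (simp add: card_image inj_on_def T_def)
  have d1: "Lam ` terms_of_size n \<inter> (\<Union>i\<in>{..n}. ?A i) = {}" by auto
  have "card (Lam ` terms_of_size n \<union> (\<Union>i\<in>{..n}. ?A i)) = T n + (\<Sum>i\<le>n. T i * T (n - i))"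
    by (subst card_Un_disjoint) (use finite_tos fin d1 cU cL in auto)
  moreover have "Var n \<notin> Lam ` terms_of_size n \<union> (\<Union>i\<in>{..n}. ?A i)" by auto
  ultimately show ?thesis unfolding T_def tos_Suc
    by (subst card_insert_disjoint) (use finite_tos fin in auto)
qed

lemma T_pos: "n > 0 \<Longrightarrow> T n > 0"
  by (cases n) (auto simp: T_Suc)

lemma T_mono_Suc: "T n \<le> T (Suc n)" by (simp add: T_Suc)

definition Tf :: "complex fps" where "Tf = Abs_fps (\<lambda>n. of_nat (T n))"

definition Af :: "complex fps" where "Af = Abs_fps (\<lambda>n. if n = 0 then 0 else 1)"

lemma Tf_nth [simp]: "Tf $ n = of_nat (T n)" by (simp add: Tf_def)

lemma Tf_eq: "Tf = Af + fps_X * Tf + fps_X * (Tf * Tf)"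
proof (rule fps_ext)
  fix n show "Tf $ n = (Af + fps_X * Tf + fps_X * (Tf * Tf)) $ n"
  proof (cases n)
    case 0 thus ?thesis by (simp add: Tf_def Af_def T_0)
  next
    case (Suc m)
    have h: "(Tf*Tf)$m = (\<Sum>i\<le>m. of_nat (T i) * of_nat (T (m-i)))"
      by (simp add: fps_mult_nth atLeast0AtMost)
    show ?thesis unfolding Suc
      by (simp add: h Af_def T_Suc)
  qed
qed

lemma Af_eq: "(1 - fps_X) * Af = fps_X"
proof (rule fps_ext)
  fix n show "((1 - fps_X) * Af) $ n = (fps_X :: complex fps) $ n"
    by (cases n) (auto simp: Af_def algebra_simps)
qed

lemma Y_sq: "(1 - fps_X - 2 * fps_X * Tf)^2 * (1 - fps_X) = (1 - fps_X)^3 - 4 * fps_X^2"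
proof -
  have E: "(1 - fps_X) * Tf = fps_X + (1 - fps_X) * fps_X * Tf + (1 - fps_X) * fps_X * Tf^2"
  proof -
    have "(1 - fps_X) * Tf = (1 - fps_X) * (Af + fps_X * Tf + fps_X * (Tf * Tf))" using Tf_eq by simp
    also have "\<dots> = (1 - fps_X) * Af + (1 - fps_X) * fps_X * Tf + (1 - fps_X) * fps_X * Tf^2"
      by (simp add: algebra_simps power2_eq_square)
    finally show ?thesis by (simp add: Af_eq)
  qed
  show ?thesis using E by algebra
qed

definition qq :: "complex \<Rightarrow> complex" where
  "qq z = 1 + of_real (rho*(1+rho)) * z + of_real rho * z^2"

definition GG :: "complex \<Rightarrow> complex" where
  "GG z = csqrt (qq z) / csqrt (1 - z)"

lemma Re_qq: assumes "norm z < 2/5" shows "Re (qq z) > 0"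
proof -
  have r: "0 < rho" "rho < 3/10" using rho_props by auto
  have a: "norm (of_real (rho*(1+rho)) * z) \<le> 39/100 * (2/5)"
  proof -
    have "norm (of_real (rho*(1+rho)) * z) = rho*(1+rho) * norm z" unfolding norm_mult norm_of_real using r by simp
    also have "\<dots> \<le> 39/100 * (2/5)"
    proof (rule mult_mono)
      have "rho*(1+rho) \<le> 3/10*(1+3/10)" by (rule mult_mono) (use r in auto)
      thus "rho*(1+rho) \<le> 39/100" by simp
    qed (use assms r in auto)
    finally show ?thesis .
  qed
  have b: "norm (of_real rho * z^2) \<le> 3/10 * (4/25)"
  proof -
    have "norm (z^2) \<le> (2/5)^2" using assms by (simp add: norm_power power_mono)
    hence "norm (of_real rho * z^2) = rho * norm (z^2)" using r by (simp add: norm_mult)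
    moreover have "rho * norm (z^2) \<le> 3/10 * (4/25)" 
      using \<open>norm (z^2) \<le> (2/5)^2\<close> r by (intro mult_mono) (auto simp: power2_eq_square)
    ultimately show ?thesis by simp
  qed
  have "Re (of_real (rho*(1+rho)) * z) \<ge> - norm (of_real (rho*(1+rho)) * z)"
    using abs_Re_le_cmod[of "of_real (rho*(1+rho)) * z"] by linarith
  moreover have "Re (of_real rho * z^2) \<ge> - norm (of_real rho * z^2)"
    using abs_Re_le_cmod[of "of_real rho * z^2"] by linarith
  ultimately show ?thesis using a b unfolding qq_def by simp
qed

lemma Re_1m: "norm z < 1 \<Longrightarrow> Re (1 - z) > 0"
  using abs_Re_le_cmod[of z] by simp

lemma GG_holo: "GG holomorphic_on ball 0 (2/5)"
proof -
  have "(\<lambda>z. csqrt (qq z) / csqrt (1 - z)) holomorphic_on ball 0 (2/5)"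
  proof (intro holomorphic_intros)
    show "qq holomorphic_on ball 0 (2/5)" unfolding qq_def by (intro holomorphic_intros)
    fix z assume z: "z \<in> ball (0::complex) (2/5)"
    show "qq z \<notin> \<real>\<^sub>\<le>\<^sub>0" using Re_qq[of z] z by (auto simp: complex_nonpos_Reals_iff)
    show "1 - z \<notin> \<real>\<^sub>\<le>\<^sub>0" using Re_1m[of z] z by (auto simp: complex_nonpos_Reals_iff)
    show "csqrt (1 - z) \<noteq> 0" using Re_1m[of z] z by auto
  qed
  thus ?thesis unfolding GG_def .
qed

definition Gf :: "complex fps" where "Gf = fps_expansion GG 0"

lemma hasG: "GG has_fps_expansion Gf"
  unfolding Gf_def by (rule has_fps_expansion_fps_expansion[OF _ _ GG_holo]) auto

lemma fps_exp_unique: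
  fixes f :: "complex \<Rightarrow> complex"
  assumes "f has_fps_expansion F" "f has_fps_expansion H" shows "F = H"
  by (rule fps_ext) (simp add: fps_nth_fps_expansion[OF assms(1)] fps_nth_fps_expansion[OF assms(2)])

definition Qf :: "complex fps" where
  "Qf = 1 + fps_const (of_real (rho*(1+rho))) * fps_X + fps_const (of_real rho) * fps_X^2"

lemma hasQ: "qq has_fps_expansion Qf"
  unfolding qq_def Qf_def by (intro fps_expansion_intros)

lemma GGsq: "Gf * Gf * (1 - fps_X) = Qf"
proof -
  have h: "(\<lambda>z. GG z * GG z * (1 - z)) has_fps_expansion Gf * Gf * (1 - fps_X)"
    by (intro fps_expansion_intros hasG)
  have ev: "eventually (\<lambda>z. z \<in> ball (0::complex) (2/5)) (nhds 0)"
    by (intro eventually_nhds_in_open) auto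
  have "eventually (\<lambda>z. GG z * GG z * (1 - z) = qq z) (nhds 0)"
  proof (rule eventually_mono[OF ev])
    fix z :: complex assume z: "z \<in> ball 0 (2/5)"
    have nz: "csqrt (1 - z) \<noteq> 0" using Re_1m[of z] z by auto
    have "z \<noteq> 1" using z by auto
    have "GG z * GG z * (1 - z) = (csqrt (qq z))^2 / (csqrt (1 - z))^2 * (1 - z)"
      unfolding GG_def by (simp add: power2_eq_square)
    also have "\<dots> = qq z" using nz \<open>z \<noteq> 1\<close> by (simp del: csqrt_eq_0)
    finally show "GG z * GG z * (1 - z) = qq z" .
  qed
  hence "qq has_fps_expansion Gf * Gf * (1 - fps_X)"
    using h has_fps_expansion_cong[of "\<lambda>z. GG z * GG z * (1 - z)" qq] by blast
  thus ?thesis using hasQ fps_exp_unique by blast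
qed

definition sc :: "complex \<Rightarrow> complex fps \<Rightarrow> complex fps" where
  "sc r f = Abs_fps (\<lambda>n. f $ n * r ^ n)"

lemma sc_mult: "sc r (f * g) = sc r f * sc r g"
proof (rule fps_ext)
  fix n
  have "sc r (f * g) $ n = (\<Sum>i=0..n. f $ i * g $ (n - i)) * r ^ n"
    by (simp add: sc_def fps_mult_nth)
  also have "\<dots> = (\<Sum>i=0..n. (f $ i * r ^ i) * (g $ (n - i) * r ^ (n - i)))"
    by (subst sum_distrib_right) (rule sum.cong, simp, simp add: power_add[symmetric] algebra_simps)
  also have "\<dots> = (sc r f * sc r g) $ n" by (simp add: sc_def fps_mult_nth)
  finally show "sc r (f * g) $ n = (sc r f * sc r g) $ n" .
qed

definition rr :: complex where "rr = - (1 / of_real rho)"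

definition Uf :: "complex fps" where "Uf = sc rr (fps_binomial (1/2))"

lemma UU: "Uf * Uf = 1 + fps_const rr * fps_X"
proof -
  have "Uf * Uf = sc rr (fps_binomial (1/2 + 1/2))"
    unfolding Uf_def sc_mult[symmetric] fps_binomial_add_mult ..
  also have "\<dots> = sc rr (1 + fps_X)" by (simp add: fps_binomial_1)
  also have "\<dots> = 1 + fps_const rr * fps_X"
    by (rule fps_ext) (auto simp: sc_def fps_X_def)
  finally show ?thesis .
qed

lemma P_id: "(1 + fps_const rr * fps_X) * Qf = 1 - 3 * fps_X - fps_X^2 - fps_X^3"
proof -
  let ?a = "of_real (rho*(1+rho)) :: complex" and ?b = "of_real rho :: complex"
  have r: "rho > 0" "rho^3 + rho^2 + 3*rho - 1 = 0" using rho_props by auto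
  have e1: "rr + ?a = -3"
  proof -
    have "-(1/rho) + rho*(1+rho) = -3" using r by (simp add: field_simps power2_eq_square power3_eq_cube)
    hence "of_real (-(1/rho) + rho*(1+rho)) = (of_real (-3) :: complex)" by simp
    thus ?thesis unfolding rr_def by simp
  qed
  have e2: "?b + rr * ?a = -1" unfolding rr_def using r by (simp add: field_simps)
  have e3: "rr * ?b = -1" unfolding rr_def using r by (simp add: field_simps)
  have "(1 + fps_const rr * fps_X) * Qf = 1 + (fps_const rr + fps_const ?a) * fps_X
     + (fps_const ?b + fps_const rr * fps_const ?a) * fps_X^2 + fps_const rr * fps_const ?b * fps_X^3"
    unfolding Qf_def by algebra
  also have "\<dots> = 1 + fps_const (rr + ?a) * fps_X
     + fps_const (?b + rr * ?a) * fps_X^2 + fps_const (rr * ?b) * fps_X^3"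
    by simp
  also have "\<dots> = 1 - 3 * fps_X - fps_X^2 - fps_X^3"
    unfolding e1 e2 e3 by (simp add: numeral_fps_const[symmetric])
  finally show ?thesis .
qed

definition Yf :: "complex fps" where "Yf = Uf * Gf"

lemma Y_eq: "Yf = 1 - fps_X - 2 * fps_X * Tf"
proof -
  let ?Y' = "1 - fps_X - 2 * fps_X * Tf"
  have "Yf * Yf * (1 - fps_X) = (Uf * Uf) * (Gf * Gf * (1 - fps_X))"
    unfolding Yf_def by (simp add: algebra_simps)
  also have "\<dots> = 1 - 3 * fps_X - fps_X^2 - fps_X^3" unfolding UU GGsq P_id ..
  also have "\<dots> = ?Y'^2 * (1 - fps_X)" unfolding Y_sq by algebra
  finally have e: "Yf * Yf * (1 - fps_X) = ?Y' * ?Y' * (1 - fps_X)" by (simp add: power2_eq_square)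
  have nz: "(1 - fps_X :: complex fps) \<noteq> 0"
  proof
    assume "(1 - fps_X :: complex fps) = 0"
    hence "(1 - fps_X :: complex fps) $ 0 = 0" by simp
    thus False by simp
  qed
  have "Yf * Yf = ?Y' * ?Y'" using e nz by simp
  hence "(Yf - ?Y') * (Yf + ?Y') = 0" by (simp add: algebra_simps)
  moreover have "(Yf + ?Y') $ 0 \<noteq> 0"
  proof -
    have g0: "Gf $ 0 = 1" unfolding Gf_def fps_expansion_def by (simp add: GG_def qq_def)
    have "Yf $ 0 = 1" unfolding Yf_def by (simp add: g0 Uf_def sc_def)
    thus ?thesis by simp
  qed
  hence "Yf + ?Y' \<noteq> 0" proof (rule contrapos_nn) assume "Yf + ?Y' = 0" thus "(Yf + ?Y') $ 0 = 0" by simp qed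
  ultimately have "Yf - ?Y' = 0" by auto
  thus ?thesis by simp
qed

lemma gb_Suc: "(x::real) gchoose (Suc k) = (x gchoose k) * ((x - of_nat k) / (of_nat k + 1))"
proof -
  have "((x - 1) + 1) gchoose (Suc k) = (x - 1 + 1) / of_nat (Suc k) * ((x - 1) gchoose k)"
    by (rule gbinomial_factors)
  hence "x gchoose (Suc k) = x * ((x - 1) gchoose k) / (of_nat k + 1)" by simp
  also have "x * ((x - 1) gchoose k) = (x - of_nat k) * (x gchoose k)"
    by (rule gbinomial_absorb_comp [symmetric])
  finally show ?thesis by simp
qed

definition cc :: "nat \<Rightarrow> real" where "cc j = ((1/2::real) gchoose j) * (-1)^j"

lemma cc_0 [simp]: "cc 0 = 1" by (simp add: cc_def)

lemma cc_Suc: "cc (Suc j) = cc j * ((real j - 1/2) / (real j + 1))"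
  unfolding cc_def gb_Suc by (simp add: field_simps)

lemma cc_1 [simp]: "cc 1 = -1/2" using cc_Suc[of 0] by simp
lemma cc_Suc0 [simp]: "cc (Suc 0) = -1/2" using cc_Suc[of 0] by simp

lemma cc_neg: "j \<ge> 1 \<Longrightarrow> cc j < 0"
proof (induction j rule: dec_induct)
  case base thus ?case by simp
next
  case (step j)
  have "(real j - 1/2) / (real j + 1) > 0" using step by auto
  hence "cc j * ((real j - 1/2) / (real j + 1)) < 0" using step by (intro mult_neg_pos) auto
  thus ?case by (simp only: cc_Suc)
qed

lemma cc_nz: "cc j \<noteq> 0"
proof (cases "j = 0")
  case False hence "cc j < 0" by (intro cc_neg) auto
  thus ?thesis by simp
qed simp

lemma cc_abs_le1: "\<bar>cc j\<bar> \<le> 1"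
proof (induction j)
  case (Suc j)
  have "\<bar>(real j - 1/2) / (real j + 1)\<bar> \<le> 1" by (auto simp: abs_if field_simps)
  hence "\<bar>cc j\<bar> * \<bar>(real j - 1/2) / (real j + 1)\<bar> \<le> 1 * 1"
    using Suc by (intro mult_mono) auto
  thus ?case by (simp add: cc_Suc abs_mult)
qed simp

lemma cc_mono2: assumes n1: "1 \<le> n" shows "n \<le> m \<Longrightarrow> \<bar>cc n\<bar> * real n ^ 2 \<le> \<bar>cc m\<bar> * real m ^ 2"
proof (induction m rule: dec_induct)
  case base thus ?case by simp
next
  case (step m)
  have m1: "real m \<ge> 1" using step n1 by auto
  have f: "(real m - 1/2) / (real m + 1) * (real m + 1)^2 \<ge> real m ^ 2"
  proof -
    have "(real m - 1/2) / (real m + 1) * (real m + 1)^2 = (real m - 1/2) * (real m + 1)"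
      using m1 by (simp add: power2_eq_square field_simps)
    also have "\<dots> \<ge> real m ^ 2" using m1 by (simp add: power2_eq_square algebra_simps)
    finally show ?thesis .
  qed
  have "\<bar>cc (Suc m)\<bar> * real (Suc m) ^ 2 = \<bar>cc m\<bar> * ((real m - 1/2) / (real m + 1) * (real m + 1)^2)"
    using m1 by (simp add: cc_Suc abs_mult)
  also have "\<dots> \<ge> \<bar>cc m\<bar> * real m ^ 2" using f by (intro mult_left_mono) auto
  finally show ?case using step by linarith
qed

lemma cc_lower: "1 \<le> m \<Longrightarrow> \<bar>cc m\<bar> * real m ^ 2 \<ge> 1/2"
  using cc_mono2[of 1 m] by simp

lemma cc_ratio_bound:
  assumes "k \<le> m" shows "\<bar>cc (m - k)\<bar> / \<bar>cc m\<bar> \<le> 4 * (real k + 1)^2"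
proof (cases "m = 0")
  case True thus ?thesis using assms by simp
next
  case False
  hence m1: "m \<ge> 1" by auto
  have cm: "\<bar>cc m\<bar> > 0" using cc_nz[of m] by simp
  show ?thesis
  proof (cases "m - k = 0")
    case True
    hence "k = m" using assms by auto
    have "1 \<le> 2 * (\<bar>cc m\<bar> * real m ^ 2)" using cc_lower[OF m1] by linarith
    also have "\<dots> \<le> \<bar>cc m\<bar> * (4 * (real k + 1)^2)"
      using \<open>k = m\<close> cm by (simp add: power2_eq_square algebra_simps mult_left_mono)
    finally show ?thesis using True cm by (simp add: field_simps)
  next
    case False
    let ?n = "m - k"
    have n1: "1 \<le> ?n" using False by auto
    have A: "\<bar>cc ?n\<bar> * real ?n ^ 2 \<le> \<bar>cc m\<bar> * real m ^ 2" using cc_mono2[OF n1] by auto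
    have e: "real m = real ?n + real k" using assms by auto
    have kk: "real k \<le> real k * real ?n" using mult_left_mono[of 1 "real ?n" "real k"] n1 by simp
    have B: "real m \<le> 2 * (real k + 1) * real ?n" using e kk n1 by (simp add: algebra_simps)
    have "real m ^ 2 \<le> (2 * (real k + 1) * real ?n)^2" using B by (intro power_mono) auto
    also have "\<dots> = (4 * (real k + 1)^2) * real ?n ^ 2" by (simp add: power2_eq_square algebra_simps)
    finally have "\<bar>cc m\<bar> * real m ^ 2 \<le> \<bar>cc m\<bar> * ((4 * (real k + 1)^2) * real ?n ^ 2)"
      using cm by (intro mult_left_mono) auto
    hence "\<bar>cc ?n\<bar> * real ?n ^ 2 \<le> (\<bar>cc m\<bar> * (4 * (real k + 1)^2)) * real ?n ^ 2"
      using A by (simp add: mult.assoc)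
    moreover have "real ?n ^ 2 > 0" using n1 by simp
    ultimately have "\<bar>cc ?n\<bar> \<le> \<bar>cc m\<bar> * (4 * (real k + 1)^2)"
      by (meson mult_le_cancel_right_pos)
    thus ?thesis using cm by (simp add: field_simps)
  qed
qed

lemma cc_ratio_lim: "(\<lambda>j. cc (Suc j) / cc j) \<longlonglongrightarrow> 1"
proof -
  have "(\<lambda>j. 1 - 3/2 * inverse (real (Suc j))) \<longlonglongrightarrow> 1 - 3/2 * 0"
    by (intro tendsto_intros LIMSEQ_inverse_real_of_nat)
  moreover have "cc (Suc j) / cc j = 1 - 3/2 * inverse (real (Suc j))" for j
  proof -
    have "cc (Suc j) / cc j = (real j - 1/2) / (real j + 1)" using cc_nz[of j] by (simp add: cc_Suc)
    also have "\<dots> = 1 - 3/2 * inverse (real (Suc j))" by (simp add: field_simps)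
    finally show ?thesis .
  qed
  ultimately show ?thesis by simp
qed

lemma cc_ratio_lim': "(\<lambda>j. cc j / cc (Suc j)) \<longlonglongrightarrow> 1"
proof -
  have "(\<lambda>j. inverse (cc (Suc j) / cc j)) \<longlonglongrightarrow> inverse 1"
    by (intro tendsto_inverse cc_ratio_lim) simp
  thus ?thesis by simp
qed

lemma cc_shift_lim: "(\<lambda>m. cc m / cc (m + k)) \<longlonglongrightarrow> 1"
proof (induction k)
  case 0 thus ?case using cc_nz by simp
next
  case (Suc k)
  have "(\<lambda>m. cc m / cc (m + k) * (cc (m + k) / cc (Suc (m + k)))) \<longlonglongrightarrow> 1 * 1"
    using Suc LIMSEQ_ignore_initial_segment[OF cc_ratio_lim', of k]
    by (intro tendsto_mult) (auto simp: add.commute)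
  moreover have "(\<lambda>m. cc m / cc (m + k) * (cc (m + k) / cc (Suc (m + k)))) = (\<lambda>m. cc m / cc (m + Suc k))"
    by (rule ext) (simp add: cc_nz)
  ultimately show ?case by simp
qed

lemma cc_diff_lim: "(\<lambda>m. cc (m - k) / cc m) \<longlonglongrightarrow> 1"
  by (rule LIMSEQ_offset[of _ k]) (simp add: cc_shift_lim)

lemma summable_poly_geo:
  fixes \<theta> :: real assumes "0 \<le> \<theta>" "\<theta> < 1"
  shows "summable (\<lambda>k. (real k + 1)^2 * \<theta>^k)"
proof -
  let ?c = "(1 + \<theta>) / 2"
  have "(\<lambda>k. \<theta> * (1 + inverse (real (Suc k)))^2) \<longlonglongrightarrow> \<theta> * (1 + 0)^2"
    by (intro tendsto_intros LIMSEQ_inverse_real_of_nat)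
  moreover have "\<theta> < ?c" using assms by simp
  ultimately have "eventually (\<lambda>k. \<theta> * (1 + inverse (real (Suc k)))^2 < ?c) sequentially"
    by (intro order_tendstoD) auto
  then obtain N where N: "\<And>k. k \<ge> N \<Longrightarrow> \<theta> * (1 + inverse (real (Suc k)))^2 < ?c"
    unfolding eventually_sequentially by blast
  show ?thesis
  proof (rule summable_ratio_test[of ?c N])
    show "?c < 1" using assms by simp
    fix k assume "k \<ge> N"
    hence h: "\<theta> * (1 + inverse (real (Suc k)))^2 \<le> ?c" using N by (simp add: less_imp_le)
    have e0: "(1 + inverse (real (Suc k))) * (real k + 1) = real (Suc k) + 1"
      by (simp add: field_simps)
    have e: "(1 + inverse (real (Suc k)))^2 * (real k + 1)^2 = (real (Suc k) + 1)^2"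
      unfolding e0[symmetric] by (simp add: power_mult_distrib)
    have "norm ((real (Suc k) + 1)^2 * \<theta>^Suc k) = (real (Suc k) + 1)^2 * \<theta>^Suc k"
      using assms by simp
    also have "\<dots> = \<theta> * ((1 + inverse (real (Suc k)))^2 * (real k + 1)^2) * \<theta>^k"
      unfolding e by simp
    also have "\<dots> = (\<theta> * (1 + inverse (real (Suc k)))^2) * ((real k + 1)^2 * \<theta>^k)"
      by (simp only: ac_simps)
    also have "\<dots> \<le> ?c * ((real k + 1)^2 * \<theta>^k)" using h assms by (intro mult_right_mono) auto
    also have "\<dots> = ?c * norm ((real k + 1)^2 * \<theta>^k)" using assms by simp
    finally show "norm ((real (Suc k) + 1)^2 * \<theta>^Suc k) \<le> ?c * norm ((real k + 1)^2 * \<theta>^k)" .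
  qed
qed

lemma darboux:
  fixes a :: "nat \<Rightarrow> complex"
  assumes bnd: "\<And>k. norm (a k) \<le> M * \<theta>^k" and th: "0 \<le> \<theta>" "\<theta> < 1"
  shows "(\<lambda>m. (\<Sum>k\<le>m. of_real (cc (m - k)) * a k) / of_real (cc m)) \<longlonglongrightarrow> suminf a"
proof -
  define A where "A k m = (if k \<le> m then of_real (cc (m - k) / cc m) * a k else 0)" for k m
  have "norm (a 0) \<le> M" using bnd[of 0] by simp
  hence M0: "M \<ge> 0" by (meson norm_ge_zero order_trans)
  have lim: "(\<lambda>m. A k m) \<longlonglongrightarrow> a k" for k
  proof -
    have "(\<lambda>m. of_real (cc (m - k) / cc m) * a k) \<longlonglongrightarrow> of_real 1 * a k"
      by (intro tendsto_intros cc_diff_lim)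
    moreover have "eventually (\<lambda>m. of_real (cc (m - k) / cc m) * a k = A k m) sequentially"
      using eventually_ge_at_top[of k] by eventually_elim (simp add: A_def)
    ultimately show ?thesis by (simp add: tendsto_cong)
  qed
  have bound: "norm (A k m) \<le> 4 * M * ((real k + 1)^2 * \<theta>^k)" for k m
  proof (cases "k \<le> m")
    case True
    have "norm (A k m) = \<bar>cc (m - k)\<bar> / \<bar>cc m\<bar> * norm (a k)"
      using True by (simp add: A_def norm_mult norm_divide abs_divide)
    also have "\<dots> \<le> (4 * (real k + 1)^2) * (M * \<theta>^k)"
      using cc_ratio_bound[OF True] bnd by (intro mult_mono) auto
    finally show ?thesis by (simp add: algebra_simps)
  next
    case False thus ?thesis using M0 th by (simp add: A_def)
  qed
  have summ: "summable (\<lambda>k. 4 * M * ((real k + 1)^2 * \<theta>^k))"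
    using summable_poly_geo[OF th] by (rule summable_mult)
  have T: "((\<lambda>m. suminf (\<lambda>k. A k m)) \<longlonglongrightarrow> suminf a)"
    using tannerys_theorem[where a = A and b = a and M = "\<lambda>k. 4 * M * ((real k + 1)^2 * \<theta>^k)"
        and F = sequentially] lim bound summ by (auto intro: always_eventually)
  have eq: "suminf (\<lambda>k. A k m) = (\<Sum>k\<le>m. of_real (cc (m - k)) * a k) / of_real (cc m)" for m
  proof -
    have "suminf (\<lambda>k. A k m) = (\<Sum>k\<le>m. A k m)"
      by (rule suminf_finite) (auto simp: A_def)
    also have "\<dots> = (\<Sum>k\<le>m. of_real (cc (m - k)) * a k / of_real (cc m))"
      by (rule sum.cong) (auto simp: A_def)
    also have "\<dots> = (\<Sum>k\<le>m. of_real (cc (m - k)) * a k) / of_real (cc m)"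
      by (simp add: sum_divide_distrib)
    finally show ?thesis .
  qed
  show ?thesis using T unfolding eq .
qed

lemma of_real_gchoose: "of_real ((x::real) gchoose k) = ((of_real x :: complex) gchoose k)"
  by (cases k) (simp_all add: gbinomial_Suc of_real_prod)

lemma Uf_nth: "Uf $ j = of_real (cc j) / of_real rho ^ j"
proof -
  have "Uf $ j = ((1/2::complex) gchoose j) * (-(1 / of_real rho))^j"
    by (simp add: Uf_def sc_def rr_def fps_binomial_def)
  also have "((1/2::complex) gchoose j) = of_real ((1/2::real) gchoose j)"
    by (simp add: of_real_gchoose)
  also have "(-(1 / (of_real rho::complex)))^j = (-1)^j / of_real rho ^ j"
    by (simp add: power_minus' power_divide)
  finally show ?thesis by (simp add: cc_def)
qed

lemma Tf_from_Y: "m \<ge> 1 \<Longrightarrow> of_nat (T m) = -(1/2) * Yf $ Suc m"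
  unfolding Y_eq by (simp add: numeral_fps_const mult.assoc)

definition aa :: "nat \<Rightarrow> complex" where "aa k = Gf $ k * of_real rho ^ k"

lemma Y_scaled: "Yf $ n * of_real rho ^ n = (\<Sum>k\<le>n. of_real (cc (n - k)) * aa k)"
proof -
  have r: "rho > 0" using rho_props by simp
  have "Yf $ n = (\<Sum>k=0..n. Gf $ k * Uf $ (n - k))"
    unfolding Yf_def by (simp add: mult.commute[of Uf] fps_mult_nth)
  hence "Yf $ n * of_real rho ^ n = (\<Sum>k=0..n. Gf $ k * Uf $ (n - k) * of_real rho ^ n)"
    by (simp add: sum_distrib_right)
  also have "\<dots> = (\<Sum>k\<le>n. of_real (cc (n - k)) * aa k)"
    unfolding atMost_atLeast0
  proof (rule sum.cong)
    fix k assume "k \<in> {0..n}"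
    hence "of_real rho ^ n = (of_real rho ^ (n - k) * of_real rho ^ k :: complex)"
      by (simp add: power_add[symmetric])
    thus "Gf $ k * Uf $ (n - k) * of_real rho ^ n = of_real (cc (n - k)) * aa k"
      using r by (simp add: Uf_nth aa_def)
  qed simp
  finally show ?thesis .
qed

lemma Gf_nth: "Gf $ k = (deriv ^^ k) GG 0 / fact k"
  by (simp add: Gf_def fps_expansion_def)

lemma aa_sums: "aa sums GG (of_real rho)"
proof -
  have inb: "of_real rho \<in> ball (0::complex) (2/5)" using rho_props by simp
  have eq: "aa = (\<lambda>n. (deriv ^^ n) GG 0 / fact n * (of_real rho - 0) ^ n)"
    by (rule ext) (simp add: aa_def Gf_nth)
  from holomorphic_power_series[OF GG_holo inb] show ?thesis
    unfolding eq .
qed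

lemma aa_bound: "\<exists>M. \<forall>k. norm (aa k) \<le> M * (rho * 20 / 7)^k"
proof -
  let ?w = "7/20 :: real"
  have "of_real ?w \<in> ball (0::complex) (2/5)" by simp
  from holomorphic_power_series[OF GG_holo this]
  have "summable (\<lambda>k. Gf $ k * of_real ?w ^ k)" by (simp add: Gf_nth sums_iff)
  hence "(\<lambda>k. Gf $ k * of_real ?w ^ k) \<longlonglongrightarrow> 0" by (rule summable_LIMSEQ_zero)
  hence "Bseq (\<lambda>k. Gf $ k * of_real ?w ^ k)" by (intro convergent_imp_Bseq) (auto simp: convergent_def)
  then obtain K where K: "\<And>k. norm (Gf $ k * of_real ?w ^ k) \<le> K" unfolding Bseq_def by blast
  have "norm (aa k) \<le> K * (rho * 20 / 7)^k" for k
  proof -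
    have r: "rho > 0" using rho_props by simp
    have e1: "norm (aa k) = norm (Gf $ k) * rho ^ k" using r by (simp add: aa_def norm_mult norm_power)
    have e2: "norm (Gf $ k * of_real ?w ^ k) = norm (Gf $ k) * ?w ^ k" by (simp add: norm_mult norm_power)
    have e3: "rho ^ k = ?w ^ k * (rho * 20 / 7)^k" by (simp add: power_mult_distrib[symmetric])
    have "norm (aa k) = norm (Gf $ k * of_real ?w ^ k) * (rho * 20 / 7)^k"
      unfolding e1 e2 e3 by (simp only: mult.assoc)
    also have "\<dots> \<le> K * (rho * 20 / 7)^k" using K r by (intro mult_right_mono) auto
    finally show ?thesis .
  qed
  thus ?thesis by blast
qed

lemma GG_rho_nz: "GG (of_real rho) \<noteq> 0"
proof -
  have r: "rho > 0" "rho < 3/10" using rho_props by auto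
  have "Re (qq (of_real rho)) > 0" using r by (intro Re_qq) simp
  hence "qq (of_real rho) \<noteq> 0" by auto
  moreover have "1 - (of_real rho :: complex) \<noteq> 0" using r by (auto simp: complex_eq_iff)
  ultimately show ?thesis by (simp add: GG_def)
qed

definition Dn :: "nat \<Rightarrow> complex" where "Dn n = Yf $ n * of_real rho ^ n / of_real (cc n)"

lemma Dn_lim: "Dn \<longlonglongrightarrow> GG (of_real rho)"
proof -
  obtain M where M: "\<And>k. norm (aa k) \<le> M * (rho * 20 / 7)^k" using aa_bound by blast
  have th: "0 \<le> rho * 20 / 7" "rho * 20 / 7 < 1" using rho_props by auto
  have "(\<lambda>m. (\<Sum>k\<le>m. of_real (cc (m - k)) * aa k) / of_real (cc m)) \<longlonglongrightarrow> suminf aa"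
    by (rule darboux[OF M th])
  moreover have "suminf aa = GG (of_real rho)" using aa_sums by (simp add: sums_iff)
  ultimately show ?thesis unfolding Dn_def Y_scaled by simp
qed

lemma ratio_lim: "(\<lambda>n. real (T n) / real (T (Suc n))) \<longlonglongrightarrow> rho"
proof -
  let ?L = "GG (of_real rho)"
  have r: "rho > 0" using rho_props by simp
  have Y_Dn: "Yf $ j = Dn j * of_real (cc j) / of_real rho ^ j" for j
    using cc_nz[of j] r by (simp add: Dn_def)
  have c: "(\<lambda>n. of_real (cc (n + 2) / cc (Suc (n + 2))) :: complex) \<longlonglongrightarrow> of_real 1"
    by (intro tendsto_of_real LIMSEQ_ignore_initial_segment cc_ratio_lim')
  have "(\<lambda>n. Dn (n + 2) / Dn (n + 3) * of_real (cc (n + 2) / cc (Suc (n + 2))) * of_real rho)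
      \<longlonglongrightarrow> ?L / ?L * of_real 1 * of_real rho"
    by (intro tendsto_intros c LIMSEQ_ignore_initial_segment Dn_lim GG_rho_nz)
  also have "?L / ?L * of_real 1 * of_real rho = of_real rho" using GG_rho_nz by simp
  also have "(\<lambda>n. Dn (n + 2) / Dn (n + 3) * of_real (cc (n + 2) / cc (Suc (n + 2))) * of_real rho)
     = (\<lambda>n. of_real (real (T (n + 1)) / real (T (Suc (n + 1)))))"
  proof (rule ext)
    fix n
    have "of_real (real (T (n + 1)) / real (T (Suc (n + 1)))) = (of_nat (T (n+1)) / of_nat (T (n+2)) :: complex)"
      by simp
    also have "\<dots> = Yf $ (n+2) / Yf $ (n+3)"
      by (simp add: Tf_from_Y numeral_eq_Suc)
    also have "\<dots> = Dn (n + 2) / Dn (n + 3) * of_real (cc (n + 2) / cc (Suc (n + 2))) * of_real rho"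
      unfolding Y_Dn using r cc_nz[of "n+2"] cc_nz[of "n+3"]
      by (simp add: field_simps numeral_eq_Suc)
    finally show "Dn (n + 2) / Dn (n + 3) * of_real (cc (n + 2) / cc (Suc (n + 2))) * of_real rho
       = of_real (real (T (n + 1)) / real (T (Suc (n + 1))))" by simp
  qed
  finally have "(\<lambda>n. real (T (n + 1)) / real (T (Suc (n + 1)))) \<longlonglongrightarrow> rho"
    unfolding tendsto_of_real_iff .
  thus ?thesis by (rule LIMSEQ_offset)
qed

lemma T_mono: "j \<le> n \<Longrightarrow> T j \<le> T n"
  by (rule lift_Suc_mono_le[of T]) (auto simp: T_mono_Suc)

lemma shift_lim: "(\<lambda>n. real (T n) / real (T (n + h))) \<longlonglongrightarrow> rho ^ h"
proof (induction h)
  case 0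
  have "eventually (\<lambda>n. 1 = real (T n) / real (T (n + 0))) sequentially"
    using eventually_ge_at_top[of 1] by eventually_elim (use T_pos in fastforce)
  thus ?case by (simp add: tendsto_cong[symmetric] tendsto_eventually)
next
  case (Suc h)
  have "(\<lambda>n. real (T n) / real (T (n + h)) * (real (T (n + h)) / real (T (Suc (n + h))))) \<longlonglongrightarrow> rho ^ h * rho"
    using Suc LIMSEQ_ignore_initial_segment[OF ratio_lim, of h]
    by (intro tendsto_mult) (auto simp: add.commute)
  moreover have "eventually (\<lambda>n. real (T n) / real (T (n + h)) * (real (T (n + h)) / real (T (Suc (n + h))))
     = real (T n) / real (T (n + Suc h))) sequentially"
    using eventually_ge_at_top[of 1]
  proof eventually_elim
    case (elim n) hence "T (n + h) > 0" by (intro T_pos) auto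
    thus ?case by simp
  qed
  ultimately have "(\<lambda>n. real (T n) / real (T (n + Suc h))) \<longlonglongrightarrow> rho ^ h * rho"
    by (rule Lim_transform_eventually)
  thus ?case by (simp add: mult.commute)
qed

lemma back_lim: "(\<lambda>n. real (T (n - h)) / real (T n)) \<longlonglongrightarrow> rho ^ h"
  by (rule LIMSEQ_offset[of _ h]) (simp add: shift_lim)

lemma tsize_funpow [simp]: "tsize ((Lam ^^ h) t) = tsize t + h"
  by (induction h) auto

lemma heads_funpow [simp]: "heads ((Lam ^^ h) t) = heads t + h"
  by (induction h) auto

lemma inj_funpow: "inj (Lam ^^ h)"
proof (induction h)
  case (Suc h) thus ?case by (auto simp: inj_def)
qed simp

lemma strip: "h \<le> heads t \<Longrightarrow> \<exists>s. t = (Lam ^^ h) s"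
proof (induction h arbitrary: t)
  case (Suc h)
  then obtain t' where t: "t = Lam t'" by (cases t) auto
  hence "h \<le> heads t'" using Suc by simp
  then obtain s where "t' = (Lam ^^ h) s" using Suc by blast
  thus ?case using t by (intro exI[of _ s]) simp
qed simp

lemma heads_lt: "heads t < tsize t"
  by (induction t) auto

lemma ge_count: assumes "h \<le> n" shows "card {t \<in> terms_of_size n. h \<le> heads t} = T (n - h)"
proof -
  have "{t \<in> terms_of_size n. h \<le> heads t} = (Lam ^^ h) ` terms_of_size (n - h)"
  proof (intro equalityI subsetI)
    fix t assume "t \<in> {t \<in> terms_of_size n. h \<le> heads t}"
    hence t: "tsize t = n" "h \<le> heads t" by (auto simp: terms_of_size_def)
    then obtain s where s: "t = (Lam ^^ h) s" using strip by blast
    hence "tsize s = n - h" using t by simp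
    thus "t \<in> (Lam ^^ h) ` terms_of_size (n - h)" using s by (auto simp: terms_of_size_def)
  next
    fix t assume "t \<in> (Lam ^^ h) ` terms_of_size (n - h)"
    then obtain s where "t = (Lam ^^ h) s" "tsize s = n - h" by (auto simp: terms_of_size_def)
    thus "t \<in> {t \<in> terms_of_size n. h \<le> heads t}" using assms by (auto simp: terms_of_size_def)
  qed
  thus ?thesis using inj_funpow[of h] by (simp add: card_image inj_on_subset T_def)
qed

lemma eq_count: assumes "h < n"
  shows "real (card {t \<in> terms_of_size n. heads t = h}) = real (T (n - h)) - real (T (n - Suc h))"
proof -
  have "{t \<in> terms_of_size n. heads t = h} = {t \<in> terms_of_size n. h \<le> heads t} - {t \<in> terms_of_size n. Suc h \<le> heads t}"
    by auto
  hence "card {t \<in> terms_of_size n. heads t = h} = T (n - h) - T (n - Suc h)"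
    using assms finite_tos[of n] by (simp add: card_Diff_subset ge_count subset_iff)
  moreover have "T (n - Suc h) \<le> T (n - h)" by (rule T_mono) auto
  ultimately show ?thesis by (simp add: of_nat_diff)
qed

lemma prob_lim: "(\<lambda>n. prob_heads n h) \<longlonglongrightarrow> (1 - rho) * rho ^ h"
proof -
  have "(\<lambda>n. real (T (n - h)) / real (T n) - real (T (n - Suc h)) / real (T n)) \<longlonglongrightarrow> rho ^ h - rho ^ Suc h"
    by (intro tendsto_diff back_lim)
  moreover have "eventually (\<lambda>n. real (T (n - h)) / real (T n) - real (T (n - Suc h)) / real (T n) = prob_heads n h) sequentially"
    using eventually_gt_at_top[of h]
    by eventually_elim (simp add: prob_heads_def eq_count diff_divide_distrib T_def[symmetric])
  ultimately have "(\<lambda>n. prob_heads n h) \<longlonglongrightarrow> rho ^ h - rho ^ Suc h" by (rule Lim_transform_eventually)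
  thus ?thesis by (simp add: algebra_simps)
qed

lemma sum_heads: "(\<Sum>t\<in>terms_of_size n. real (heads t)) = (\<Sum>h<n. real (T (n - Suc h)))"
proof -
  have "(\<Sum>t\<in>terms_of_size n. real (heads t)) = (\<Sum>t\<in>terms_of_size n. \<Sum>h<n. of_bool (Suc h \<le> heads t))"
  proof (rule sum.cong)
    fix t assume "t \<in> terms_of_size n"
    hence "heads t < n" using heads_lt[of t] by (simp add: terms_of_size_def)
    hence "{..<n} \<inter> {h. Suc h \<le> heads t} = {..<heads t}" by auto
    thus "real (heads t) = (\<Sum>h<n. of_bool (Suc h \<le> heads t))" by simp
  qed simp
  also have "\<dots> = (\<Sum>h<n. \<Sum>t\<in>terms_of_size n. of_bool (Suc h \<le> heads t))"
    by (rule sum.swap)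
  also have "\<dots> = (\<Sum>h<n. real (T (n - Suc h)))"
  proof (rule sum.cong)
    fix h assume "h \<in> {..<n}"
    hence "card {t \<in> terms_of_size n. Suc h \<le> heads t} = T (n - Suc h)" by (intro ge_count) auto
    moreover have "terms_of_size n \<inter> {t. Suc h \<le> heads t} = {t \<in> terms_of_size n. Suc h \<le> heads t}" by auto
    ultimately show "(\<Sum>t\<in>terms_of_size n. of_bool (Suc h \<le> heads t)) = real (T (n - Suc h))"
      using finite_tos[of n] by simp
  qed simp
  finally show ?thesis .
qed

lemma geo_bound: "\<exists>N. \<forall>j n. j \<le> n \<longrightarrow> (1/2)^N * real (T j) \<le> (1/2)^(n - j) * real (T n)"
proof -
  have "eventually (\<lambda>n. real (T n) / real (T (Suc n)) < 1/2) sequentially"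
    using ratio_lim rho_props by (intro order_tendstoD) auto
  then obtain N where N: "\<And>n. n \<ge> N \<Longrightarrow> real (T n) / real (T (Suc n)) < 1/2"
    unfolding eventually_sequentially by blast
  have hstep: "real (T n) \<le> 1/2 * real (T (Suc n))" if "n \<ge> N" for n
  proof -
    have "T (Suc n) > 0" by (rule T_pos) simp
    thus ?thesis using N[OF that] by (simp add: field_simps)
  qed
  have iter: "real (T j) \<le> (1/2)^(n - j) * real (T n)" if "N \<le> j" "j \<le> n" for j n
    using that(2)
  proof (induction n rule: dec_induct)
    case base thus ?case by simp
  next
    case (step n)
    have "real (T j) \<le> (1/2)^(n - j) * real (T n)" by fact
    also have "\<dots> \<le> (1/2)^(n - j) * (1/2 * real (T (Suc n)))"
      using hstep[of n] step(1) that(1) by (intro mult_left_mono) auto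
    also have "\<dots> = (1/2)^(Suc n - j) * real (T (Suc n))"
      using step(1) by (simp add: Suc_diff_le)
    finally show ?case .
  qed
  have "(1/2)^N * real (T j) \<le> (1/2)^(n - j) * real (T n)" if "j \<le> n" for j n
  proof (cases "n \<le> N")
    case True
    have "(1/2::real)^N * real (T j) \<le> (1/2)^N * real (T n)"
      using T_mono[OF that] by (intro mult_left_mono) auto
    also have "\<dots> \<le> (1/2)^(n - j) * real (T n)"
      using True by (intro mult_right_mono power_decreasing) auto
    finally show ?thesis .
  next
    case False
    show ?thesis
    proof (cases "N \<le> j")
      case True
      have "(1/2::real)^N * real (T j) \<le> 1 * real (T j)" by (intro mult_right_mono power_le_one) auto
      also have "\<dots> \<le> (1/2)^(n - j) * real (T n)" using iter[OF True that] by simp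
      finally show ?thesis .
    next
      case False': False
      have "(1/2::real)^N * real (T j) \<le> (1/2)^N * real (T N)"
        using T_mono[of j N] False' by (intro mult_left_mono) auto
      also have "\<dots> \<le> (1/2)^N * ((1/2)^(n - N) * real (T n))"
        using iter[of N n] False by (intro mult_left_mono) auto
      also have "\<dots> = (1/2)^n * real (T n)"
        using False by (simp add: power_add[symmetric])
      also have "\<dots> \<le> (1/2)^(n - j) * real (T n)"
        by (intro mult_right_mono power_decreasing) auto
      finally show ?thesis .
    qed
  qed
  thus ?thesis by blast
qed

lemma exp_lim: "exp_heads \<longlonglongrightarrow> rho / (1 - rho)"
proof -
  obtain N where N: "\<And>j n. j \<le> n \<Longrightarrow> (1/2)^N * real (T j) \<le> (1/2)^(n - j) * real (T n)"
    using geo_bound by blast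
  define A where "A h n = (if h < n then real (T (n - Suc h)) / real (T n) else 0)" for h n
  have lim: "(\<lambda>n. A h n) \<longlonglongrightarrow> rho ^ Suc h" for h
  proof -
    have "eventually (\<lambda>n. real (T (n - Suc h)) / real (T n) = A h n) sequentially"
      using eventually_gt_at_top[of h] by eventually_elim (simp add: A_def)
    with back_lim show ?thesis by (rule Lim_transform_eventually)
  qed
  have bound: "norm (A h n) \<le> 2^N * (1/2)^Suc h" for h n
  proof (cases "h < n")
    case True
    have Tn: "real (T n) > 0" using T_pos[of n] True by simp
    have "(1/2)^N * real (T (n - Suc h)) \<le> (1/2)^Suc h * real (T n)"
      using N[of "n - Suc h" n] True by (simp add: Suc_diff_Suc)
    hence "real (T (n - Suc h)) \<le> 2^N * (1/2)^Suc h * real (T n)"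
      by (simp add: field_simps power_divide)
    hence "real (T (n - Suc h)) / real (T n) \<le> 2^N * (1/2)^Suc h" using Tn
      by (simp add: divide_le_eq)
    thus ?thesis using True by (simp add: A_def)
  qed (simp add: A_def)
  have summ: "summable (\<lambda>h. (2::real)^N * (1/2)^Suc h)"
    by (intro summable_mult summable_geometric_iff[THEN iffD2] summable_Suc_iff[THEN iffD2]) simp
  have TT: "(\<lambda>n. suminf (\<lambda>h. A h n)) \<longlonglongrightarrow> suminf (\<lambda>h. rho ^ Suc h)"
    using tannerys_theorem[where a = A and b = "\<lambda>h. rho ^ Suc h" and M = "\<lambda>h. 2^N * (1/2)^Suc h"
        and F = sequentially] lim bound summ by (auto intro: always_eventually)
  have s1: "suminf (\<lambda>h. rho ^ Suc h) = rho / (1 - rho)"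
  proof -
    have "norm rho < 1" using rho_props by simp
    hence "(\<lambda>h. rho ^ h) sums (1 / (1 - rho))" by (rule geometric_sums)
    hence "(\<lambda>h. rho * rho ^ h) sums (rho * (1 / (1 - rho)))" by (rule sums_mult)
    thus ?thesis by (simp add: sums_iff)
  qed
  have s2: "suminf (\<lambda>h. A h n) = exp_heads n" for n
  proof -
    have "suminf (\<lambda>h. A h n) = (\<Sum>h<n. A h n)" by (rule suminf_finite) (auto simp: A_def)
    also have "\<dots> = (\<Sum>h<n. real (T (n - Suc h)) / real (T n))" by (rule sum.cong) (auto simp: A_def)
    also have "\<dots> = exp_heads n"
      by (simp add: exp_heads_def sum_heads sum_divide_distrib T_def)
    finally show ?thesis .
  qed
  show ?thesis using TT unfolding s1 s2 .
qed

theorem mainTheorem4: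
  shows "(\<forall>h::nat. (\<lambda>n. prob_heads n h) \<longlonglongrightarrow> (1 - rho) * rho ^ h)
         \<and> exp_heads \<longlonglongrightarrow> rho / (1 - rho)"
  using prob_lim exp_lim by blast

end
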